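(* Let $D$ be a rooted hyperbolic digraph with constant out-degree and bounded in-degree. Then every elliptic self-embedding of $D$ is an automorphism of $D$.
   Context: A directed path $x_0\ldots x_n$ has edges $x_ix_{i+1}$; $d(x,y)$ is the length of a shortest directed $x$-$y$ path ($\infty$ if none), called an $x$-$y$ geodesic. $D$ is rooted if some vertex $o$ satisfies $d(o,v)<\infty$ for all $v$. $\mathcal{B}^+_k(x)=\{y:d(x,y)\le k\}$, $\mathcal{B}^-_k(x)=\{y:d(y,x)\le k\}$, extended to sets by unions. A geodesic triangle consists of three vertices and for each pair a geodesic between them (in one direction); it is $\delta$-thin if whenever $P,Q,R$ are its sides with the start of $P$ being the start or end of $Q$ and the end of $P$ being the start or end of $R$, $P\subseteq\mathcal{B}^+_\delta(Q)\cup\mathcal{B}^-_\delta(R)$; $D$ is hyperbolic if for some $\delta\ge0$ all geodesic triangles are $\delta$-thin. A self-embedding is an injective $g:V(D)\to V(D)$ with $xy\in E(D)\iff g(x)g(y)\in E(D)$; it is elliptic if $g(F)=F$ for some nonempty finite vertex set $F$. An automorphism is a bijective self-embedding. *)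

theory Defs
  imports Main "HOL-Library.Extended_Nat"
begin

(* A digraph is given by its edge relation E on the vertex type 'a (V(D) = UNIV). *)

definition dwalk :: "('a \<times> 'a) set \<Rightarrow> 'a list \<Rightarrow> bool" where
  "dwalk E p \<longleftrightarrow> p \<noteq> [] \<and> (\<forall>i < length p - 1. (p ! i, p ! Suc i) \<in> E)"

definition dist :: "('a \<times> 'a) set \<Rightarrow> 'a \<Rightarrow> 'a \<Rightarrow> enat" where
  "dist E x y = (INF p \<in> {p. dwalk E p \<and> hd p = x \<and> last p = y}. enat (length p - 1))"

definition geodesic :: "('a \<times> 'a) set \<Rightarrow> 'a list \<Rightarrow> bool" where
  "geodesic E p \<longleftrightarrow> dwalk E p \<and> enat (length p - 1) = dist E (hd p) (last p)"

definition out_ball :: "('a \<times> 'a) set \<Rightarrow> nat \<Rightarrow> 'a set \<Rightarrow> 'a set" where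
  "out_ball E k A = {y. \<exists>x\<in>A. dist E x y \<le> enat k}"

definition in_ball :: "('a \<times> 'a) set \<Rightarrow> nat \<Rightarrow> 'a set \<Rightarrow> 'a set" where
  "in_ball E k A = {y. \<exists>x\<in>A. dist E y x \<le> enat k}"

definition geodesic_triangle :: "('a \<times> 'a) set \<Rightarrow> 'a list \<Rightarrow> 'a list \<Rightarrow> 'a list \<Rightarrow> bool" where
  "geodesic_triangle E P1 P2 P3 \<longleftrightarrow>
     geodesic E P1 \<and> geodesic E P2 \<and> geodesic E P3 \<and>
     (\<exists>x y z. {hd P1, last P1} = {x, y} \<and> {hd P2, last P2} = {y, z} \<and> {hd P3, last P3} = {x, z})"

definition thin_cond :: "('a \<times> 'a) set \<Rightarrow> nat \<Rightarrow> 'a list \<Rightarrow> 'a list \<Rightarrow> 'a list \<Rightarrow> bool" where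
  "thin_cond E \<delta> P Q R \<longleftrightarrow>
     ((hd P = hd Q \<or> hd P = last Q) \<and> (last P = hd R \<or> last P = last R)
      \<longrightarrow> set P \<subseteq> out_ball E \<delta> (set Q) \<union> in_ball E \<delta> (set R))"

definition thin_triangle :: "('a \<times> 'a) set \<Rightarrow> nat \<Rightarrow> 'a list \<Rightarrow> 'a list \<Rightarrow> 'a list \<Rightarrow> bool" where
  "thin_triangle E \<delta> P1 P2 P3 \<longleftrightarrow>
     thin_cond E \<delta> P1 P2 P3 \<and> thin_cond E \<delta> P1 P3 P2 \<and>
     thin_cond E \<delta> P2 P1 P3 \<and> thin_cond E \<delta> P2 P3 P1 \<and>
     thin_cond E \<delta> P3 P1 P2 \<and> thin_cond E \<delta> P3 P2 P1"

definition hyperbolic :: "('a \<times> 'a) set \<Rightarrow> bool" where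
  "hyperbolic E \<longleftrightarrow> (\<exists>\<delta>::nat. \<forall>P1 P2 P3. geodesic_triangle E P1 P2 P3 \<longrightarrow> thin_triangle E \<delta> P1 P2 P3)"

definition rooted :: "('a \<times> 'a) set \<Rightarrow> bool" where
  "rooted E \<longleftrightarrow> (\<exists>r. \<forall>v. dist E r v < \<infinity>)"

definition constant_out_degree :: "('a \<times> 'a) set \<Rightarrow> bool" where
  "constant_out_degree E \<longleftrightarrow> (\<exists>k. \<forall>v. finite {w. (v, w) \<in> E} \<and> card {w. (v, w) \<in> E} = k)"

definition bounded_in_degree :: "('a \<times> 'a) set \<Rightarrow> bool" where
  "bounded_in_degree E \<longleftrightarrow> (\<exists>m. \<forall>v. finite {u. (u, v) \<in> E} \<and> card {u. (u, v) \<in> E} \<le> m)"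

definition self_embedding :: "('a \<times> 'a) set \<Rightarrow> ('a \<Rightarrow> 'a) \<Rightarrow> bool" where
  "self_embedding E g \<longleftrightarrow> inj g \<and> (\<forall>x y. (x, y) \<in> E \<longleftrightarrow> (g x, g y) \<in> E)"

definition elliptic :: "('a \<times> 'a) set \<Rightarrow> ('a \<Rightarrow> 'a) \<Rightarrow> bool" where
  "elliptic E g \<longleftrightarrow> self_embedding E g \<and> (\<exists>F. F \<noteq> {} \<and> finite F \<and> g ` F = F)"

definition automorphism :: "('a \<times> 'a) set \<Rightarrow> ('a \<Rightarrow> 'a) \<Rightarrow> bool" where
  "automorphism E g \<longleftrightarrow> self_embedding E g \<and> bij g"

end

theory Submission
  imports Defs
begin

lemma dwalk_Cons:
  "p \<noteq> [] \<Longrightarrow> dwalk E (y # p) \<longleftrightarrow> (y, hd p) \<in> E \<and> dwalk E p"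
  unfolding dwalk_def
  apply (cases p)
   apply simp
  apply (auto simp: less_Suc_eq_0_disj nth_Cons split: nat.splits)
  done

lemma dwalk_map:
  assumes "\<And>x y. (x, y) \<in> E \<Longrightarrow> (h x, h y) \<in> E" and "dwalk E p"
  shows "dwalk E (map h p)"
  using assms unfolding dwalk_def by auto

lemma iter_edge:
  assumes "\<And>x y. (x, y) \<in> E \<Longrightarrow> (g x, g y) \<in> E"
  shows "(x, y) \<in> E \<Longrightarrow> ((g ^^ n) x, (g ^^ n) y) \<in> E"
  by (induction n) (auto simp: assms)

definition S :: "('a \<times> 'a) set \<Rightarrow> nat \<Rightarrow> 'a \<Rightarrow> 'a set" where
  "S E n x = {y. \<exists>p. dwalk E p \<and> hd p = y \<and> last p = x \<and> length p \<le> Suc n}"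

lemma S_finite:
  assumes "\<And>v. finite {u. (u, v) \<in> E}"
  shows "finite (S E n x)"
proof (induction n)
  case 0
  have "S E 0 x \<subseteq> {x}"
    unfolding S_def dwalk_def by (auto simp: le_Suc_eq length_Suc_conv)
  then show ?case using finite_subset by blast
next
  case (Suc n)
  have "S E (Suc n) x \<subseteq> S E n x \<union> (\<Union>z\<in>S E n x. {u. (u, z) \<in> E})"
  proof
    fix y assume "y \<in> S E (Suc n) x"
    then obtain p where p: "dwalk E p" "hd p = y" "last p = x" "length p \<le> Suc (Suc n)"
      unfolding S_def by blast
    show "y \<in> S E n x \<union> (\<Union>z\<in>S E n x. {u. (u, z) \<in> E})"
    proof (cases "length p \<le> Suc n")
      case True then show ?thesis using p unfolding S_def by blast
    next
      case False
      define q where "q = tl p"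
      have q: "p = y # q" "q \<noteq> []" using p False unfolding q_def
        by (cases p; auto)+
      then have "(y, hd q) \<in> E" "dwalk E q" using p dwalk_Cons by metis+
      moreover have "hd q \<in> S E n x" unfolding S_def
        using q p \<open>dwalk E q\<close> by (intro CollectI exI[of _ q]) auto
      ultimately show ?thesis by blast
    qed
  qed
  moreover have "finite (S E n x \<union> (\<Union>z\<in>S E n x. {u. (u, z) \<in> E}))"
    using Suc assms by auto
  ultimately show ?case using finite_subset by blast
qed

lemma out_closed:
  assumes "constant_out_degree E" "self_embedding E g"
    and "x \<in> range g" "(x, y) \<in> E"
  shows "y \<in> range g"
proof -
  obtain k where k: "\<And>v. finite {w. (v, w) \<in> E} \<and> card {w. (v, w) \<in> E} = k"
    using assms(1) unfolding constant_out_degree_def by blast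
  obtain v where v: "x = g v" using assms(3) by blast
  have inj: "inj g" and ed: "\<And>a b. (a, b) \<in> E \<longleftrightarrow> (g a, g b) \<in> E"
    using assms(2) unfolding self_embedding_def by blast+
  have sub: "g ` {w. (v, w) \<in> E} \<subseteq> {w. (x, w) \<in> E}" using ed v by auto
  have "card (g ` {w. (v, w) \<in> E}) = k" using k card_image inj
    by (metis inj_on_subset subset_UNIV)
  then have "g ` {w. (v, w) \<in> E} = {w. (x, w) \<in> E}"
    using k sub by (metis card_subset_eq)
  then show ?thesis using assms(4) by auto
qed

lemma walk_closed:
  assumes "constant_out_degree E" "self_embedding E g"
  shows "dwalk E p \<Longrightarrow> hd p \<in> range g \<Longrightarrow> last p \<in> range g"
proof (induction p)
  case Nil then show ?case by (simp add: dwalk_def)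
next
  case (Cons a p)
  show ?case
  proof (cases "p = []")
    case True then show ?thesis using Cons by simp
  next
    case False
    then have "(a, hd p) \<in> E" "dwalk E p" using Cons.prems dwalk_Cons by metis+
    then have "hd p \<in> range g" using out_closed[OF assms] Cons.prems by auto
    then show ?thesis using Cons.IH \<open>dwalk E p\<close> False by simp
  qed
qed

lemma dist_fin_walk:
  assumes "dist E x y < \<infinity>"
  shows "\<exists>p. dwalk E p \<and> hd p = x \<and> last p = y"
proof (rule ccontr)
  assume "\<not> ?thesis"
  then have "{p. dwalk E p \<and> hd p = x \<and> last p = y} = {}" by blast
  then have "dist E x y = Inf {}" unfolding dist_def by (metis image_empty)
  then have "dist E x y = \<infinity>" by (simp add: top_enat_def)
  then show False using assms by simp
qed

theorem corollary3p15:
  fixes E :: "('a \<times> 'a) set" and g :: "'a \<Rightarrow> 'a"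
  assumes "rooted E" and "hyperbolic E"
    and "constant_out_degree E" and "bounded_in_degree E"
    and "elliptic E g"
  shows "automorphism E g"
proof -
  have se: "self_embedding E g" using assms(5) unfolding elliptic_def by blast
  then have inj: "inj g" and ed: "\<And>a b. (a, b) \<in> E \<Longrightarrow> (g a, g b) \<in> E"
    unfolding self_embedding_def by blast+
  obtain F where F: "F \<noteq> {}" "finite F" "g ` F = F"
    using assms(5) unfolding elliptic_def by blast
  obtain r where r: "\<And>v. dist E r v < \<infinity>" using assms(1) unfolding rooted_def by blast
  have fin_in: "\<And>v. finite {u. (u, v) \<in> E}"
    using assms(4) unfolding bounded_in_degree_def by blast
  obtain f where f: "f \<in> F" using F by blast
  obtain p where p: "dwalk E p" "hd p = r" "last p = f" using dist_fin_walk[OF r[of f]] by blast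
  define L where "L = length p"
  have p0: "p \<noteq> []" using p(1) unfolding dwalk_def by simp
  define T where "T = (\<Union>z\<in>F. S E L z)"
  have Tfin: "finite T" unfolding T_def using F(2) S_finite[OF fin_in] by (intro finite_UN_I)
  have Fn: "(g ^^ n) f \<in> F" for n
  proof (induction n)
    case 0 then show ?case using f by simp
  next
    case (Suc n) then show ?case using F(3) by (metis funpow.simps(2) o_apply imageI)
  qed
  have "(g ^^ n) r \<in> T" for n
  proof -
    have "dwalk E (map (g ^^ n) p)" by (rule dwalk_map[OF iter_edge[of E g, OF ed] p(1)])
    moreover have "hd (map (g ^^ n) p) = (g ^^ n) r" "last (map (g ^^ n) p) = (g ^^ n) f"
      using p p0 by (auto simp: hd_map last_map)
    moreover have "length (map (g ^^ n) p) \<le> Suc L" unfolding L_def by simp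
    ultimately have "(g ^^ n) r \<in> S E L ((g ^^ n) f)" unfolding S_def by blast
    then show ?thesis unfolding T_def using Fn[of n] by blast
  qed
  then have "range (\<lambda>n. (g ^^ n) r) \<subseteq> T" by blast
  then have "finite (range (\<lambda>n. (g ^^ n) r))" using Tfin finite_subset by blast
  then have "\<not> inj (\<lambda>n. (g ^^ n) r)" using finite_imageD infinite_UNIV_nat by metis
  then obtain a b where ab: "a < b" "(g ^^ a) r = (g ^^ b) r"
  proof -
    obtain x y :: nat where xy: "x \<noteq> y" "(g ^^ x) r = (g ^^ y) r"
      using \<open>\<not> inj (\<lambda>n. (g ^^ n) r)\<close> unfolding inj_def by blast
    show ?thesis
    proof (cases "x < y")
      case True then show ?thesis using xy that by blast
    next
      case False then have "y < x" using xy(1) by simp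
      then show ?thesis using xy(2) that by simp
    qed
  qed
  have "(g ^^ a) ((g ^^ (b - a)) r) = (g ^^ (a + (b - a))) r"
    by (simp only: funpow_add o_apply)
  also have "a + (b - a) = b" using ab(1) by simp
  finally have "(g ^^ a) ((g ^^ (b - a)) r) = (g ^^ a) r" using ab(2) by simp
  moreover have "inj (g ^^ a)" by (rule inj_fn[OF inj])
  ultimately have ba: "(g ^^ (b - a)) r = r" unfolding inj_def by blast
  define c where "c = b - a - 1"
  have "b - a = Suc c" unfolding c_def using ab(1) by simp
  then have "r = g ((g ^^ c) r)" using ba by simp
  then have rr: "r \<in> range g" by auto
  have "surj g"
  proof -
    have "v \<in> range g" for v
    proof -
      obtain q where "dwalk E q" "hd q = r" "last q = v" using dist_fin_walk[OF r[of v]] by blast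
      then show ?thesis using walk_closed[OF assms(3) se] rr by blast
    qed
    then show ?thesis by blast
  qed
  then show ?thesis unfolding automorphism_def using se inj by (simp add: bij_def)
qed

end
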